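(* Let $\theta\in\mathbb{R}$ with $\omega_0:=\cos\theta\neq 0$, put $\gamma=\sin\theta$, and let $p\in\mathbb{R}$. Let $a_1,a_2$ be boson annihilation operators with creation operators $a_1^\dagger,a_2^\dagger$, satisfying $[a_j,a_k^\dagger]=\delta_{jk}$ and $[a_j,a_k]=[a_j^\dagger,a_k^\dagger]=0$. For $m=1,2,3$ define $$J_m^{\gamma}=\frac{i^{m-1}}{2}\sum_{j,k=1}^{2}\Big[c^{(4-m)}_{jk}+i^m(1-\delta_{m2})\,\gamma\, c^{(m)}_{jk}\Big]a_j^\dagger a_k ,$$ and set $J_0^\gamma=J_3^\gamma$ and $J_\pm^{\gamma}=\sum_{r=0}^{1}(\pm i)^r\omega_0^{\,r-p}J^{\gamma}_{r+1}=\omega_0^{-p}J_1^\gamma\pm i\,\omega_0^{1-p}J_2^\gamma$. Then $$[J_0^\gamma,J_\pm^\gamma]=\pm\omega_0J_\pm^\gamma,\qquad [J_+^\gamma,J_-^\gamma]=2\,\omega_0^{-2p+1}J_0^\gamma .$$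
   Context: $\delta$ is the Kronecker delta. The coefficient matrices are $c^{(1)}=\begin{pmatrix}-1&0\\0&1\end{pmatrix}$, $c^{(2)}=\begin{pmatrix}0&-1\\1&0\end{pmatrix}$, $c^{(3)}=\begin{pmatrix}0&1\\1&0\end{pmatrix}$ (entries $c^{(m)}_{jk}$, $j,k=1,2$). The identities are understood as identities of operators on the polynomial (finite-particle) subspace of the two-mode boson Fock space. *)

theory Defs
  imports "HOL-Analysis.Complex_Transcendental"
begin

text \<open>Two-mode boson Fock space: a state is given by its coefficients
  with respect to the number basis |n1,n2>, i.e. a function (nat * nat) => complex.
  The polynomial (finite-particle) subspace consists of the finitely supported ones.\<close>

type_synonym state = "nat \<times> nat \<Rightarrow> complex"
type_synonym op = "state \<Rightarrow> state"

definition fock_poly :: "state set" where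
  "fock_poly = {f. finite {n. f n \<noteq> 0}}"

text \<open>Annihilation operator a_j (j = 1, 2): a|n> = sqrt n |n-1>.\<close>
definition ann :: "nat \<Rightarrow> op" where
  "ann j f = (\<lambda>(n1, n2). if j = 1 then complex_of_real (sqrt (real (n1 + 1))) * f (n1 + 1, n2)
                         else complex_of_real (sqrt (real (n2 + 1))) * f (n1, n2 + 1))"

text \<open>Creation operator a_j^dagger (j = 1, 2): a^dagger|n> = sqrt(n+1) |n+1>.\<close>
definition cre :: "nat \<Rightarrow> op" where
  "cre j f = (\<lambda>(n1, n2). if j = 1
       then (if n1 = 0 then 0 else complex_of_real (sqrt (real n1)) * f (n1 - 1, n2))
       else (if n2 = 0 then 0 else complex_of_real (sqrt (real n2)) * f (n1, n2 - 1)))"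

definition cmat :: "nat \<Rightarrow> nat \<Rightarrow> nat \<Rightarrow> complex" where
  "cmat m j k =
     (if m = 1 then (if j = 1 \<and> k = 1 then -1 else if j = 2 \<and> k = 2 then 1 else 0)
      else if m = 2 then (if j = 1 \<and> k = 2 then -1 else if j = 2 \<and> k = 1 then 1 else 0)
      else (if j = 1 \<and> k = 2 then 1 else if j = 2 \<and> k = 1 then 1 else 0))"

definition kdelta :: "nat \<Rightarrow> nat \<Rightarrow> complex" where
  "kdelta a b = (if a = b then 1 else 0)"

definition Jg :: "real \<Rightarrow> nat \<Rightarrow> op" where
  "Jg \<gamma> m f = (\<lambda>n. (\<i> ^ (m - 1) / 2) *
      (\<Sum>j\<in>{1,2::nat}. \<Sum>k\<in>{1,2::nat}.
         (cmat (4 - m) j k + \<i> ^ m * (1 - kdelta m 2) * complex_of_real \<gamma> * cmat m j k)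
         * cre j (ann k f) n))"

text \<open>J_pm^gamma = sum_{r=0}^{1} (s i)^r omega0^(r-p) J_{r+1}^gamma with s = +1 or -1.
  Powers of omega0 (which may be negative) are complex principal powers.\<close>
definition Jpm :: "real \<Rightarrow> real \<Rightarrow> real \<Rightarrow> complex \<Rightarrow> op" where
  "Jpm \<omega>0 \<gamma> p s f = (\<lambda>n. \<Sum>r\<in>{0,1::nat}.
      (s * \<i>) ^ r * (complex_of_real \<omega>0 powr complex_of_real (real r - p)) * Jg \<gamma> (r + 1) f n)"

definition commutator :: "op \<Rightarrow> op \<Rightarrow> op" where
  "commutator A B f = (\<lambda>n. A (B f) n - B (A f) n)"

definition scaleop :: "complex \<Rightarrow> op \<Rightarrow> op" where
  "scaleop c A f = (\<lambda>n. c * A f n)"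

end

theory Submission
  imports Defs
begin
definition sq :: "nat \<Rightarrow> complex" where "sq k = complex_of_real (sqrt (real k))"
lemma sq_sq: "sq k * sq k = of_nat k"
  unfolding sq_def of_real_mult[symmetric] by simp
lemma sq_sq2: "sq k * (sq k * z) = of_nat k * z"
  by (simp add: mult.assoc[symmetric] sq_sq)

definition E11 :: op where "E11 g = cre 1 (ann 1 g)"
definition E12 :: op where "E12 g = cre 1 (ann 2 g)"
definition E21 :: op where "E21 g = cre 2 (ann 1 g)"
definition E22 :: op where "E22 g = cre 2 (ann 2 g)"

lemma E11: "E11 g (a,b) = of_nat a * g (a,b)"
  unfolding E11_def cre_def ann_def using sq_sq[of a, unfolded sq_def] by auto
lemma E22: "E22 g (a,b) = of_nat b * g (a,b)"
  unfolding E22_def cre_def ann_def using sq_sq[of b, unfolded sq_def] by auto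
lemma E12: "E12 g (a,b) = (if a = 0 then 0 else sq a * sq (b+1) * g (a - 1, b + 1))"
  unfolding E12_def cre_def ann_def sq_def by auto
lemma E21: "E21 g (a,b) = (if b = 0 then 0 else sq b * sq (a+1) * g (a + 1, b - 1))"
  unfolding E21_def cre_def ann_def sq_def by auto
lemma sq1[simp]: "sq (Suc 0) = 1" by (simp add: sq_def)
definition X :: op where "X g = (\<lambda>n. (E12 g n + E21 g n) / 2)"
definition Y :: op where "Y g = (\<lambda>n. \<i> / 2 * (E21 g n - E12 g n))"
definition Z :: op where "Z g = (\<lambda>n. (E11 g n - E22 g n) / 2)"

lemma XY0: "X (Y f) (a,b) - Y (X f) (a,b) = \<i> * Z f (a,b)"
  apply (simp add: X_def Y_def Z_def E11 E22 E12 E21)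
  by (auto simp: algebra_simps sq_sq sq_sq2 split: if_splits; simp add: field_simps sq_sq sq_sq2)
lemma YZ0: "Y (Z f) (a,b) - Z (Y f) (a,b) = \<i> * X f (a,b)"
  apply (simp add: X_def Y_def Z_def E11 E22 E12 E21)
  by (auto simp: algebra_simps sq_sq sq_sq2 split: if_splits; simp add: field_simps sq_sq sq_sq2)
lemma ZX0: "Z (X f) (a,b) - X (Z f) (a,b) = \<i> * Y f (a,b)"
  apply (simp add: X_def Y_def Z_def E11 E22 E12 E21)
  by (auto simp: algebra_simps sq_sq sq_sq2 split: if_splits; simp add: field_simps sq_sq sq_sq2)

lemma XY: "X (Y f) n = Y (X f) n + \<i> * Z f n"
  using XY0[of f "fst n" "snd n"] by (simp add: algebra_simps)
lemma YZ: "Y (Z f) n = Z (Y f) n + \<i> * X f n"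
  using YZ0[of f "fst n" "snd n"] by (simp add: algebra_simps)
lemma ZX: "Z (X f) n = X (Z f) n + \<i> * Y f n"
  using ZX0[of f "fst n" "snd n"] by (simp add: algebra_simps)

lemma linE:
  "E11 (\<lambda>n. c1 * g n + c2 * h n) n = c1 * E11 g n + c2 * E11 h n"
  "E12 (\<lambda>n. c1 * g n + c2 * h n) n = c1 * E12 g n + c2 * E12 h n"
  "E21 (\<lambda>n. c1 * g n + c2 * h n) n = c1 * E21 g n + c2 * E21 h n"
  "E22 (\<lambda>n. c1 * g n + c2 * h n) n = c1 * E22 g n + c2 * E22 h n"
  by (cases n; simp add: E11 E12 E21 E22 algebra_simps)+

lemma linX: "X (\<lambda>n. c1 * g n + c2 * h n) = (\<lambda>n. c1 * X g n + c2 * X h n)"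
  by (rule ext) (simp add: X_def linE algebra_simps add_divide_distrib)
lemma linY: "Y (\<lambda>n. c1 * g n + c2 * h n) = (\<lambda>n. c1 * Y g n + c2 * Y h n)"
  by (rule ext) (simp add: Y_def linE algebra_simps)
lemma linZ: "Z (\<lambda>n. c1 * g n + c2 * h n) = (\<lambda>n. c1 * Z g n + c2 * Z h n)"
  by (rule ext) (simp add: Z_def linE field_simps)

lemma Jg1: "Jg \<gamma> 1 = (\<lambda>f n. 1 * X f n + (- \<i> * \<gamma>) * Z f n)"
  by (intro ext) (simp add: Jg_def X_def Z_def E11_def E12_def E21_def E22_def cmat_def kdelta_def algebra_simps
     add_divide_distrib diff_divide_distrib)
lemma Jg2: "Jg \<gamma> 2 = Y"
  by (intro ext) (simp add: Jg_def Y_def E11_def E12_def E21_def E22_def cmat_def kdelta_def algebra_simps)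
lemma Jg3: "Jg \<gamma> 3 = (\<lambda>f n. 1 * Z f n + (\<i> * \<gamma>) * X f n)"
  by (intro ext) (simp add: Jg_def X_def Z_def E11_def E12_def E21_def E22_def cmat_def kdelta_def algebra_simps
     add_divide_distrib diff_divide_distrib power3_eq_cube)

lemma Jg2': "Jg \<gamma> (Suc (Suc 0)) = Y"
  using Jg2[of \<gamma>] by (simp add: numeral_2_eq_2)

lemma Jpm_eq: "Jpm \<omega> \<gamma> p s = (\<lambda>f n. (complex_of_real \<omega> powr complex_of_real (-p)) * Jg \<gamma> 1 f n
      + (s * \<i> * \<omega> * complex_of_real \<omega> powr complex_of_real (-p)) * Y f n)"
proof (intro ext)
  fix f n
  have "complex_of_real \<omega> powr complex_of_real (1 - p) = \<omega> * complex_of_real \<omega> powr complex_of_real (-p)"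
    using powr_add[of "complex_of_real \<omega>" 1 "complex_of_real (-p)"] by simp
  then show "Jpm \<omega> \<gamma> p s f n = (complex_of_real \<omega> powr complex_of_real (-p)) * Jg \<gamma> 1 f n
      + (s * \<i> * \<omega> * complex_of_real \<omega> powr complex_of_real (-p)) * Y f n"
    by (simp add: Jpm_def Jg2')
qed

theorem mainTheorem3:
  fixes \<theta> p :: real
  assumes "cos \<theta> \<noteq> 0"
  shows "\<forall>f\<in>fock_poly.
     (\<forall>s\<in>{1, -1::complex}.
        commutator (Jg (sin \<theta>) 3) (Jpm (cos \<theta>) (sin \<theta>) p s) f
          = scaleop (s * complex_of_real (cos \<theta>)) (Jpm (cos \<theta>) (sin \<theta>) p s) f)
     \<and> commutator (Jpm (cos \<theta>) (sin \<theta>) p 1) (Jpm (cos \<theta>) (sin \<theta>) p (-1)) f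
          = scaleop (2 * (complex_of_real (cos \<theta>) powr complex_of_real (- 2 * p + 1)))
                    (Jg (sin \<theta>) 3) f"
proof (intro ballI conjI)
  fix f :: state and s :: complex
  define P where "P = complex_of_real (cos \<theta>) powr complex_of_real (-p)"
  have pyth: "(complex_of_real (sin \<theta>))^2 = 1 - (complex_of_real (cos \<theta>))^2"
    by (metis (mono_tags) of_real_1 of_real_diff of_real_power sin_squared_eq)
  have ii: "\<i> * \<i> = -1" by simp
  assume "s \<in> {1, -1}"
  then have ss: "s * s = 1" by auto
  show "commutator (Jg (sin \<theta>) 3) (Jpm (cos \<theta>) (sin \<theta>) p s) f
          = scaleop (s * complex_of_real (cos \<theta>)) (Jpm (cos \<theta>) (sin \<theta>) p s) f"
  proof (rule ext)
    fix n
    show "commutator (Jg (sin \<theta>) 3) (Jpm (cos \<theta>) (sin \<theta>) p s) f n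
          = scaleop (s * complex_of_real (cos \<theta>)) (Jpm (cos \<theta>) (sin \<theta>) p s) f n"
    proof -
      have "commutator (Jg (sin \<theta>) 3) (Jpm (cos \<theta>) (sin \<theta>) p s) f n
          - scaleop (s * complex_of_real (cos \<theta>)) (Jpm (cos \<theta>) (sin \<theta>) p s) f n
          = \<i> * P * Y f n * (1 - (complex_of_real (sin \<theta>))^2 - s * s * (complex_of_real (cos \<theta>))^2)"
        unfolding commutator_def scaleop_def Jpm_eq Jg3 Jg1 linX linY linZ P_def[symmetric]
        unfolding XY YZ ZX
        by (simp add: algebra_simps power2_eq_square)
      also have "\<dots> = 0" using pyth ss by simp
      finally show ?thesis by simp
    qed
  qed
next
  fix f :: state
  define P where "P = complex_of_real (cos \<theta>) powr complex_of_real (-p)"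
  have pyth: "(complex_of_real (sin \<theta>))^2 = 1 - (complex_of_real (cos \<theta>))^2"
    by (metis (mono_tags) of_real_1 of_real_diff of_real_power sin_squared_eq)
  have ii: "\<i> * \<i> = -1" by simp
  have pw: "complex_of_real (cos \<theta>) powr complex_of_real (- 2 * p + 1) = P * P * complex_of_real (cos \<theta>)"
  proof -
    have "complex_of_real (- 2 * p + 1) = complex_of_real (-p) + complex_of_real (-p) + 1" by simp
    then show ?thesis unfolding P_def by (simp only: powr_add powr_to_1)
  qed
  show "commutator (Jpm (cos \<theta>) (sin \<theta>) p 1) (Jpm (cos \<theta>) (sin \<theta>) p (-1)) f
          = scaleop (2 * (complex_of_real (cos \<theta>) powr complex_of_real (- 2 * p + 1)))
                    (Jg (sin \<theta>) 3) f"
  proof (rule ext)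
    fix n
    show "commutator (Jpm (cos \<theta>) (sin \<theta>) p 1) (Jpm (cos \<theta>) (sin \<theta>) p (-1)) f n
          = scaleop (2 * (complex_of_real (cos \<theta>) powr complex_of_real (- 2 * p + 1)))
                    (Jg (sin \<theta>) 3) f n"
      unfolding commutator_def scaleop_def Jpm_eq Jg3 Jg1 linX linY linZ pw P_def[symmetric]
      unfolding XY YZ ZX
      by (simp add: algebra_simps)
  qed
qed

end
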